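(* Fix $\alpha\in(0,1/2)$ and $q_1,q_3\in(0,1)$. Define $m^*(3/4,3/4)=16\alpha$, $m^*(3/4,1/4)=m^*(1/4,3/4)=\frac{8(1-2\alpha)}{3}$, $m^*(1/4,1/4)=\frac{16\alpha}{9}$, $m^*=\frac{16(4\alpha+3)}{9}$, $\overline{q}^*=\frac{8\alpha+3}{8\alpha+6}$, $$\overline{q}=\frac{1}{m^*}\Big[\big(m^*(\tfrac34,\tfrac34)+m^*(\tfrac34,\tfrac14)\big)q_3+\big(m^*(\tfrac14,\tfrac34)+m^*(\tfrac14,\tfrac14)\big)q_1\Big],$$ and the treatment's steady-state ARQ $$Q=\dfrac{q_3\frac{2(4\alpha+1)}{3(1-q_3)}+q_1\frac{2(3-4\alpha)}{3(1-q_1)}}{\frac{2(4\alpha+1)}{3(1-q_3)}+\frac{2(3-4\alpha)}{3(1-q_1)}}.$$ If $(12\alpha+3)q_3+(3-4\alpha)q_1>8\alpha+3$ and $\frac{4\alpha+1}{1-q_3}+\frac{3-4\alpha}{1-q_1}<\frac{8(4\alpha+3)}{3}$, then $\overline{q}>\overline{q}^*$ but $Q<\overline{q}^*$.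
   Context: Model: user types $(x,e)\in\{1/4,3/4\}^2$ with per-period inflow masses $\alpha$ for $(3/4,3/4)$ and $(1/4,1/4)$ and $1/2-\alpha$ for $(3/4,1/4)$ and $(1/4,3/4)$; an algorithm gives quality $q(x)\in(0,1)$ to segment $x$ and a type-$(x,e)$ user churns each period with probability $(1-q(x))(1-e)$. $m^*(x,e)$ is the status quo ($q^*(x)=x$) steady-state mass, $\overline{q}^*$ the status quo ARQ, $\overline{q}$ the ARQ observed in a one-period experiment of the treatment ($q(1/4)=q_1$, $q(3/4)=q_3$) on the status quo population, and $Q$ the ARQ of the treatment at its own steady state. *)

theory Defs
  imports Complex_Main
begin

definition mstar :: "real \<Rightarrow> real \<Rightarrow> real \<Rightarrow> real" where
  "mstar \<alpha> x e =
     (if x = 3/4 \<and> e = 3/4 then 16 * \<alpha>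
      else if x = 1/4 \<and> e = 1/4 then 16 * \<alpha> / 9
      else 8 * (1 - 2 * \<alpha>) / 3)"

definition mstar_total :: "real \<Rightarrow> real" where
  "mstar_total \<alpha> = 16 * (4 * \<alpha> + 3) / 9"

definition qbar_star :: "real \<Rightarrow> real" where
  "qbar_star \<alpha> = (8 * \<alpha> + 3) / (8 * \<alpha> + 6)"

definition qbar :: "real \<Rightarrow> real \<Rightarrow> real \<Rightarrow> real" where
  "qbar \<alpha> q1 q3 = (1 / mstar_total \<alpha>) *
     ((mstar \<alpha> (3/4) (3/4) + mstar \<alpha> (3/4) (1/4)) * q3
      + (mstar \<alpha> (1/4) (3/4) + mstar \<alpha> (1/4) (1/4)) * q1)"

definition Qss :: "real \<Rightarrow> real \<Rightarrow> real \<Rightarrow> real" where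
  "Qss \<alpha> q1 q3 =
     (q3 * (2 * (4 * \<alpha> + 1) / (3 * (1 - q3))) + q1 * (2 * (3 - 4 * \<alpha>) / (3 * (1 - q1))))
     / (2 * (4 * \<alpha> + 1) / (3 * (1 - q3)) + 2 * (3 - 4 * \<alpha>) / (3 * (1 - q1)))"

end

theory Submission
  imports Defs
begin

theorem lemma2:
  fixes \<alpha> q1 q3 :: real
  assumes "0 < \<alpha>" "\<alpha> < 1/2"
    and "0 < q1" "q1 < 1" "0 < q3" "q3 < 1"
    and "(12 * \<alpha> + 3) * q3 + (3 - 4 * \<alpha>) * q1 > 8 * \<alpha> + 3"
    and "(4 * \<alpha> + 1) / (1 - q3) + (3 - 4 * \<alpha>) / (1 - q1) < 8 * (4 * \<alpha> + 3) / 3"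
  shows "qbar \<alpha> q1 q3 > qbar_star \<alpha> \<and> Qss \<alpha> q1 q3 < qbar_star \<alpha>"
proof
  have qb: "qbar \<alpha> q1 q3 = ((12 * \<alpha> + 3) * q3 + (3 - 4 * \<alpha>) * q1) / (8 * \<alpha> + 6)"
    using assms(1) unfolding qbar_def mstar_def mstar_total_def
    by (simp add: field_simps)
  show "qbar \<alpha> q1 q3 > qbar_star \<alpha>"
    unfolding qb qbar_star_def using assms(1) assms(7)
    by (simp add: divide_strict_right_mono)
  define A where "A = (4 * \<alpha> + 1) / (1 - q3)"
  define B where "B = (3 - 4 * \<alpha>) / (1 - q1)"
  have A: "A > 0" unfolding A_def using assms by simp
  have B: "B > 0" unfolding B_def using assms by simp
  have AB: "A + B < 8 * (4 * \<alpha> + 3) / 3" using assms(8) unfolding A_def B_def .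
  have Aeq: "A * (1 - q3) = 4 * \<alpha> + 1" unfolding A_def using assms by simp
  have Beq: "B * (1 - q1) = 3 - 4 * \<alpha>" unfolding B_def using assms by simp
  have "Qss \<alpha> q1 q3 = (q3 * A + q1 * B) / (A + B)"
  proof -
    have a: "2 * (4 * \<alpha> + 1) / (3 * (1 - q3)) = 2/3 * A" unfolding A_def by simp
    have b: "2 * (3 - 4 * \<alpha>) / (3 * (1 - q1)) = 2/3 * B" unfolding B_def by simp
    have "Qss \<alpha> q1 q3 = (q3 * (2/3 * A) + q1 * (2/3 * B)) / (2/3 * A + 2/3 * B)"
      unfolding Qss_def a b ..
    also have "\<dots> = (2/3 * (q3 * A + q1 * B)) / (2/3 * (A + B))"
      by (simp only: distrib_left mult.left_commute[of q3] mult.left_commute[of q1])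
    also have "\<dots> = (q3 * A + q1 * B) / (A + B)"
      by (rule nonzero_mult_divide_mult_cancel_left) simp
    finally show ?thesis .
  qed
  also have "\<dots> = 1 - 4 / (A + B)"
  proof -
    have "q3 * A + q1 * B = (A + B) - 4" using Aeq Beq by (simp add: algebra_simps)
    thus ?thesis using A B by (simp add: field_simps)
  qed
  also have "\<dots> < qbar_star \<alpha>"
  proof -
    have "3 * (A + B) < 4 * (8 * \<alpha> + 6)" using AB by simp
    hence "3 / (8 * \<alpha> + 6) < 4 / (A + B)" using A B assms(1)
      by (simp add: field_simps)
    moreover have "qbar_star \<alpha> = 1 - 3 / (8 * \<alpha> + 6)"
      unfolding qbar_star_def using assms(1) by (simp add: field_simps)
    ultimately show ?thesis by simp
  qed
  finally show "Qss \<alpha> q1 q3 < qbar_star \<alpha>" .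
qed

end
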